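(* Let $\kappa\ge 1$ and $\tau\ge 0$ be integers such that $\chi(J)\le\tau$ for every digraph $J$ with $\omega(J)<\kappa$ having no disoriented long hole. Let $G$ be a digraph with $\omega(G)\le\kappa$ having no disoriented long hole. Then for every vertex $z$ of $G$ and every integer $r\ge1$, $\chi(N^r(z))\le 3\tau\,\chi(N^{r-1}(z))$. Consequently $\chi(N^r(z))\le\tau(3\tau)^{r-1}$ for all $r\ge 1$, and $\chi(N^s(z))\le(3\tau)^{s-r}\chi(N^r(z))$ for all $s\ge r\ge 1$.
   Context: Digraphs are finite, with no loops, parallel edges or antiparallel pairs; $G^*$ denotes the underlying undirected graph and $\chi,\omega$ refer to $G^*$; for $X\subseteq V(G)$, $\chi(X)=\chi(G[X])$. $N^r(z)$ is the set of vertices at distance exactly $r$ from $z$ in $G^*$. A hole of a digraph $G$ is an induced subdigraph $C$ such that $C^*$ is an induced cycle of $G^*$ of length at least four; it is long if its length is at least five. A hole $C$ is directed if every vertex has outdegree exactly one in $C$; alternating if every vertex has outdegree two or zero in $C$; and disoriented if it is neither directed nor alternating. *)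

theory Defs
  imports Main
begin

definition digraph :: "'a set \<Rightarrow> ('a \<times> 'a) set \<Rightarrow> bool" where
  "digraph V A \<longleftrightarrow> finite V \<and> A \<subseteq> V \<times> V \<and> (\<forall>v. (v, v) \<notin> A)
     \<and> (\<forall>u v. (u, v) \<in> A \<longrightarrow> (v, u) \<notin> A)"

definition adj :: "('a \<times> 'a) set \<Rightarrow> 'a \<Rightarrow> 'a \<Rightarrow> bool" where
  "adj A u v \<longleftrightarrow> (u, v) \<in> A \<or> (v, u) \<in> A"

definition chi :: "('a \<times> 'a) set \<Rightarrow> 'a set \<Rightarrow> nat" where
  "chi A X = (LEAST k. \<exists>f :: 'a \<Rightarrow> nat. (\<forall>x\<in>X. f x < k)
       \<and> (\<forall>u\<in>X. \<forall>v\<in>X. adj A u v \<longrightarrow> f u \<noteq> f v))"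

definition clique_num :: "'a set \<Rightarrow> ('a \<times> 'a) set \<Rightarrow> nat" where
  "clique_num V A = Max {card K | K. K \<subseteq> V \<and> (\<forall>u\<in>K. \<forall>v\<in>K. u \<noteq> v \<longrightarrow> adj A u v)}"

definition is_hole :: "'a set \<Rightarrow> ('a \<times> 'a) set \<Rightarrow> 'a list \<Rightarrow> bool" where
  "is_hole V A vs \<longleftrightarrow> length vs \<ge> 4 \<and> distinct vs \<and> set vs \<subseteq> V \<and>
     (\<forall>i < length vs. \<forall>j < length vs.
        adj A (vs ! i) (vs ! j) \<longleftrightarrow> (j = Suc i mod length vs \<or> i = Suc j mod length vs))"

definition long_hole :: "'a set \<Rightarrow> ('a \<times> 'a) set \<Rightarrow> 'a list \<Rightarrow> bool" where
  "long_hole V A vs \<longleftrightarrow> is_hole V A vs \<and> length vs \<ge> 5"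

definition outdeg_in :: "('a \<times> 'a) set \<Rightarrow> 'a list \<Rightarrow> 'a \<Rightarrow> nat" where
  "outdeg_in A vs v = card {w \<in> set vs. (v, w) \<in> A}"

definition directed_hole :: "('a \<times> 'a) set \<Rightarrow> 'a list \<Rightarrow> bool" where
  "directed_hole A vs \<longleftrightarrow> (\<forall>v \<in> set vs. outdeg_in A vs v = 1)"

definition alternating_hole :: "('a \<times> 'a) set \<Rightarrow> 'a list \<Rightarrow> bool" where
  "alternating_hole A vs \<longleftrightarrow> (\<forall>v \<in> set vs. outdeg_in A vs v = 2 \<or> outdeg_in A vs v = 0)"

definition disoriented_hole :: "('a \<times> 'a) set \<Rightarrow> 'a list \<Rightarrow> bool" where
  "disoriented_hole A vs \<longleftrightarrow> \<not> directed_hole A vs \<and> \<not> alternating_hole A vs"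

definition no_disoriented_long_hole :: "'a set \<Rightarrow> ('a \<times> 'a) set \<Rightarrow> bool" where
  "no_disoriented_long_hole V A \<longleftrightarrow> (\<forall>vs. long_hole V A vs \<longrightarrow> \<not> disoriented_hole A vs)"

definition walk_len :: "'a set \<Rightarrow> ('a \<times> 'a) set \<Rightarrow> 'a \<Rightarrow> 'a \<Rightarrow> nat \<Rightarrow> bool" where
  "walk_len V A u v k \<longleftrightarrow> (\<exists>ps. length ps = Suc k \<and> hd ps = u \<and> last ps = v \<and> set ps \<subseteq> V
      \<and> (\<forall>i < k. adj A (ps ! i) (ps ! Suc i)))"

definition Nr :: "'a set \<Rightarrow> ('a \<times> 'a) set \<Rightarrow> nat \<Rightarrow> 'a \<Rightarrow> 'a set" where
  "Nr V A r z = {v \<in> V. walk_len V A z v r \<and> (\<forall>k < r. \<not> walk_len V A z v k)}"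

end

theory Submission
  imports Defs
begin


lemma adj_sym: "adj A u v = adj A v u" by (auto simp: adj_def)

lemma walk_len_0: "walk_len V A z v 0 \<Longrightarrow> v = z"
proof -
  assume "walk_len V A z v 0"
  then obtain ps where "length ps = 1" "hd ps = z" "last ps = v" unfolding walk_len_def by auto
  then show ?thesis by (cases ps) auto
qed


lemma walk_len_refl: "z \<in> V \<Longrightarrow> walk_len V A z z 0"
  unfolding walk_len_def by (rule exI[of _ "[z]"]) auto

lemma walk_len_step:
  assumes "walk_len V A z u a" "adj A u v" "v \<in> V"
  shows "walk_len V A z v (Suc a)"
proof -
  obtain ps where ps: "length ps = Suc a" "hd ps = z" "last ps = u" "set ps \<subseteq> V"
     "\<forall>i<a. adj A (ps ! i) (ps ! Suc i)" using assms(1) unfolding walk_len_def by blast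
  have "ps \<noteq> []" using ps by auto
  have pa: "ps ! a = u" using ps \<open>ps \<noteq> []\<close> by (simp add: last_conv_nth)
  have 1: "length (ps @ [v]) = Suc (Suc a)" using ps by simp
  have 2: "hd (ps @ [v]) = z" using ps \<open>ps \<noteq> []\<close> by simp
  have 3: "last (ps @ [v]) = v" by simp
  have 4: "set (ps @ [v]) \<subseteq> V" using ps assms(3) by simp
  have 5: "\<forall>i<Suc a. adj A ((ps @ [v]) ! i) ((ps @ [v]) ! Suc i)"
  proof (intro allI impI)
    fix i assume "i < Suc a"
    then consider "i < a" | "i = a" by linarith
    then show "adj A ((ps @ [v]) ! i) ((ps @ [v]) ! Suc i)"
    proof cases
      case 1 then show ?thesis using ps by (simp add: nth_append)
    next
      case 2 then show ?thesis using ps pa assms(2) by (simp add: nth_append)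
    qed
  qed
  show ?thesis unfolding walk_len_def using 1 2 3 4 5 by blast
qed

lemma walk_len_prefix:
  assumes "walk_len V A z u (Suc a)"
  shows "\<exists>x. walk_len V A z x a \<and> adj A x u \<and> x \<in> V"
proof -
  obtain ps where ps: "length ps = Suc (Suc a)" "hd ps = z" "last ps = u" "set ps \<subseteq> V"
     "\<forall>i<Suc a. adj A (ps ! i) (ps ! Suc i)" using assms(1) unfolding walk_len_def by blast
  have "ps \<noteq> []" using ps by auto
  have u: "ps ! Suc a = u" using ps \<open>ps \<noteq> []\<close> by (simp add: last_conv_nth)
  have xV: "ps ! a \<in> V" using ps by (simp add: subset_iff)
  have "walk_len V A z (ps ! a) a" unfolding walk_len_def
  proof (rule exI[of _ "take (Suc a) ps"], intro conjI allI impI)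
    show "hd (take (Suc a) ps) = z" using ps by (simp add: hd_conv_nth)
    show "last (take (Suc a) ps) = ps ! a" using ps by (subst last_conv_nth) auto
    show "set (take (Suc a) ps) \<subseteq> V" using ps set_take_subset by fastforce
    show "length (take (Suc a) ps) = Suc a" using ps by simp
    fix i assume "i < a"
    then show "adj A (take (Suc a) ps ! i) (take (Suc a) ps ! Suc i)" using ps by simp
  qed
  moreover have "adj A (ps ! a) u" using ps(5) u by (metis lessI)
  ultimately show ?thesis using xV by blast
qed

lemma Nr_sub: "Nr V A r z \<subseteq> V" unfolding Nr_def by (rule Collect_restrict)

lemma Nr_0: "z \<in> V \<Longrightarrow> Nr V A 0 z = {z}"
proof
  assume "z \<in> V"
  show "Nr V A 0 z \<subseteq> {z}"
  proof
    fix v assume "v \<in> Nr V A 0 z"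
    then have "walk_len V A z v 0" unfolding Nr_def by blast
    then have "v = z" by (rule walk_len_0)
    then show "v \<in> {z}" by simp
  qed
  have "walk_len V A z z 0" using walk_len_refl \<open>z \<in> V\<close> by metis
  then show "{z} \<subseteq> Nr V A 0 z" unfolding Nr_def using \<open>z \<in> V\<close> by simp
qed


lemma Nr_iff: "v \<in> Nr V A r z \<longleftrightarrow> v \<in> V \<and> walk_len V A z v r \<and> (\<forall>k<r. \<not> walk_len V A z v k)"
  by (simp add: Nr_def)

lemma Nr_disj_aux: "v \<in> Nr V A a z \<Longrightarrow> v \<in> Nr V A b z \<Longrightarrow> \<not> a < b"
  unfolding Nr_iff by metis

lemma Nr_disj: "v \<in> Nr V A a z \<Longrightarrow> v \<in> Nr V A b z \<Longrightarrow> a = b"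
  using Nr_disj_aux[of v V A a z b] Nr_disj_aux[of v V A b z a] by linarith

lemma Nr_adj:
  assumes "u \<in> Nr V A a z" "v \<in> Nr V A b z" "adj A u v"
  shows "b \<le> Suc a"
proof (rule ccontr)
  assume "\<not> b \<le> Suc a"
  have "walk_len V A z u a" "v \<in> V" using assms(1,2) unfolding Nr_iff by auto
  then have "walk_len V A z v (Suc a)" using assms(3) walk_len_step by metis
  moreover have "\<forall>k<b. \<not> walk_len V A z v k" using assms(2) unfolding Nr_iff by metis
  moreover have "Suc a < b" using \<open>\<not> b \<le> Suc a\<close> by simp
  ultimately show False by metis
qed

lemma Nr_adj2:
  assumes "u \<in> Nr V A a z" "v \<in> Nr V A b z" "adj A u v"
  shows "b \<le> Suc a \<and> a \<le> Suc b"
proof -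
  have "adj A v u" using assms(3) by (simp add: adj_sym)
  then show ?thesis using Nr_adj[OF assms] Nr_adj[OF assms(2,1)] by simp
qed

lemma Nr_parent:
  assumes "u \<in> Nr V A (Suc k) z"
  shows "\<exists>x \<in> Nr V A k z. adj A x u"
proof -
  have u: "u \<in> V" "walk_len V A z u (Suc k)" "\<forall>k'<Suc k. \<not> walk_len V A z u k'"
    using assms unfolding Nr_iff by metis+
  obtain x where x: "walk_len V A z x k" "adj A x u" "x \<in> V"
    using u(2) walk_len_prefix by metis
  have "\<forall>j<k. \<not> walk_len V A z x j"
  proof (intro allI impI notI)
    fix j assume "j < k" "walk_len V A z x j"
    then have "walk_len V A z u (Suc j)" using walk_len_step x(2) u(1) by metis
    moreover have "Suc j < Suc k" using \<open>j < k\<close> by simp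
    ultimately show False using u(3) by metis
  qed
  then have "x \<in> Nr V A k z" using x unfolding Nr_iff by metis
  then show ?thesis using x(2) by metis
qed




definition wk :: "('a \<times> 'a) set \<Rightarrow> 'a set \<Rightarrow> 'a list \<Rightarrow> bool" where
  "wk A L ps \<longleftrightarrow> ps \<noteq> [] \<and> set ps \<subseteq> L \<and> successively (adj A) ps"

lemma last_take_Suc: "i < length ps \<Longrightarrow> last (take (Suc i) ps) = ps ! i"
  by (subst last_conv_nth) auto

lemma successively_take: "successively P xs \<Longrightarrow> successively P (take n xs)"
  by (metis append_take_drop_id successively_append_iff)

lemma successively_drop: "successively P xs \<Longrightarrow> successively P (drop n xs)"
  by (metis append_take_drop_id successively_append_iff)

lemma shortcut1:
  assumes "wk A L ps" "i < j" "j < length ps" "adj A (ps ! i) (ps ! j)"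
  defines "qs \<equiv> take (Suc i) ps @ drop j ps"
  shows "wk A L qs \<and> hd qs = hd ps \<and> last qs = last ps \<and> length qs = length ps - (j - Suc i)"
proof -
  have s: "successively (adj A) ps" "set ps \<subseteq> L" using assms(1) unfolding wk_def by auto
  have i: "i < length ps" using assms by simp
  have "successively (adj A) qs" unfolding qs_def successively_append_iff
    using successively_take[OF s(1)] successively_drop[OF s(1)] last_take_Suc[OF i]
      hd_drop_conv_nth[OF assms(3)] assms(4) by simp
  moreover have "set qs \<subseteq> L" unfolding qs_def using s(2) set_take_subset set_drop_subset by fastforce
  moreover have "qs \<noteq> []" unfolding qs_def using i by (cases ps) auto
  moreover have "hd qs = hd ps" unfolding qs_def using i by (cases ps) auto
  moreover have "last qs = last ps" unfolding qs_def using assms(3) by simp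
  moreover have "length qs = length ps - (j - Suc i)" unfolding qs_def using assms(2,3) by simp
  ultimately show ?thesis unfolding wk_def by blast
qed

lemma shortcut2:
  assumes "wk A L ps" "i < j" "j < length ps" "ps ! i = ps ! j"
  defines "qs \<equiv> take (Suc i) ps @ drop (Suc j) ps"
  shows "wk A L qs \<and> hd qs = hd ps \<and> last qs = last ps \<and> length qs = length ps - (j - i)"
proof -
  have s: "successively (adj A) ps" "set ps \<subseteq> L" using assms(1) unfolding wk_def by auto
  have i: "i < length ps" using assms by simp
  have "successively (adj A) qs"
  proof (cases "Suc j < length ps")
    case True
    have "adj A (ps ! j) (ps ! Suc j)" using successively_nth[OF s(1) True] .
    then show ?thesis unfolding qs_def successively_append_iff
      using successively_take[OF s(1)] successively_drop[OF s(1)] last_take_Suc[OF i]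
        hd_drop_conv_nth[OF True] assms(4) by simp
  next
    case False
    then show ?thesis unfolding qs_def using successively_take[OF s(1)] by simp
  qed
  moreover have "set qs \<subseteq> L" unfolding qs_def using s(2) set_take_subset set_drop_subset by fastforce
  moreover have "qs \<noteq> []" unfolding qs_def using i by (cases ps) auto
  moreover have "hd qs = hd ps" unfolding qs_def using i by (cases ps) auto
  moreover have "last qs = last ps"
  proof (cases "Suc j < length ps")
    case True then show ?thesis unfolding qs_def by simp
  next
    case False
    then have "j = length ps - 1" using assms(3) by simp
    moreover have "ps \<noteq> []" using assms(3) by auto
    ultimately have "last ps = ps ! j" by (simp add: last_conv_nth)
    then show ?thesis unfolding qs_def using False last_take_Suc[OF i] assms(4) by simp
  qed
  moreover have "length qs = length ps - (j - i)" unfolding qs_def using assms(2,3) by simp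
  ultimately show ?thesis unfolding wk_def by blast
qed

lemma shortest_walk:
  assumes "wk A L ps0" "hd ps0 = x" "last ps0 = y"
  shows "\<exists>ps. wk A L ps \<and> hd ps = x \<and> last ps = y \<and> distinct ps \<and>
     (\<forall>i j. i < j \<longrightarrow> j < length ps \<longrightarrow> adj A (ps ! i) (ps ! j) \<longrightarrow> j = Suc i)"
proof -
  let ?P = "\<lambda>ps. wk A L ps \<and> hd ps = x \<and> last ps = y"
  obtain ps where ps: "?P ps" and min: "\<forall>qs. ?P qs \<longrightarrow> length ps \<le> length qs"
    using ex_has_least_nat[of ?P ps0 length] assms by blast
  have "distinct ps" unfolding distinct_conv_nth
  proof (intro allI impI notI)
    fix i j assume h: "i < length ps" "j < length ps" "i \<noteq> j" "ps ! i = ps ! j"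
    show False
    proof (cases "i < j")
      case True
      let ?qs = "take (Suc i) ps @ drop (Suc j) ps"
      have c: "wk A L ?qs \<and> hd ?qs = hd ps \<and> last ?qs = last ps \<and> length ?qs = length ps - (j - i)"
        using shortcut2[OF _ True h(2) h(4), of A L] ps by blast
      then have "?P ?qs" using ps by simp
      moreover have "length ?qs < length ps" using c True h(2) by simp
      ultimately show False using min by (metis not_le)
    next
      case False
      then have "j < i" using h(3) by simp
      let ?qs = "take (Suc j) ps @ drop (Suc i) ps"
      have c: "wk A L ?qs \<and> hd ?qs = hd ps \<and> last ?qs = last ps \<and> length ?qs = length ps - (i - j)"
        using shortcut2[OF _ \<open>j < i\<close> h(1) h(4)[symmetric], of A L] ps by blast
      then have "?P ?qs" using ps by simp
      moreover have "length ?qs < length ps" using c \<open>j < i\<close> h(1) by simp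
      ultimately show False using min by (metis not_le)
    qed
  qed
  moreover have "\<forall>i j. i < j \<longrightarrow> j < length ps \<longrightarrow> adj A (ps ! i) (ps ! j) \<longrightarrow> j = Suc i"
  proof (intro allI impI; rule ccontr)
    fix i j assume h: "i < j" "j < length ps" "adj A (ps ! i) (ps ! j)" "j \<noteq> Suc i"
    then have "Suc i < j" by simp
    let ?qs = "take (Suc i) ps @ drop j ps"
    have c: "wk A L ?qs \<and> hd ?qs = hd ps \<and> last ?qs = last ps \<and> length ?qs = length ps - (j - Suc i)"
      using shortcut1[OF _ h(1) h(2) h(3), of L] ps by blast
    then have "?P ?qs" using ps by simp
    moreover have "length ?qs < length ps" using c \<open>Suc i < j\<close> h(2) by simp
    ultimately show False using min by (metis not_le)
  qed
  ultimately show ?thesis using ps by blast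
qed

lemma descent:
  assumes "z \<in> V" "u \<in> Nr V A k z"
  shows "\<exists>ps. wk A ({u} \<union> (\<Union>j<k. Nr V A j z)) ps \<and> hd ps = z \<and> last ps = u"
  using assms(2)
proof (induction k arbitrary: u)
  case 0
  then have "u = z" using Nr_0[OF assms(1)] by blast
  then show ?case unfolding wk_def by (intro exI[of _ "[z]"]) simp
next
  case (Suc k)
  obtain x where x: "x \<in> Nr V A k z" "adj A x u" using Nr_parent[OF Suc.prems] by blast
  obtain ps where ps: "wk A ({x} \<union> (\<Union>j<k. Nr V A j z)) ps" "hd ps = z" "last ps = x"
    using Suc.IH[OF x(1)] by blast
  have "set ps \<subseteq> {u} \<union> (\<Union>j<Suc k. Nr V A j z)"
  proof
    fix a assume "a \<in> set ps"
    then have "a \<in> {x} \<union> (\<Union>j<k. Nr V A j z)" using ps(1) unfolding wk_def by blast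
    then show "a \<in> {u} \<union> (\<Union>j<Suc k. Nr V A j z)" using x(1) by auto
  qed
  moreover have "successively (adj A) (ps @ [u])"
    using ps x(2) unfolding wk_def successively_append_iff by simp
  ultimately have "wk A ({u} \<union> (\<Union>j<Suc k. Nr V A j z)) (ps @ [u])" unfolding wk_def by simp
  moreover have "hd (ps @ [u]) = z" using ps unfolding wk_def by simp
  ultimately show ?case by (intro exI[of _ "ps @ [u]"]) simp
qed

lemma connect:
  assumes "z \<in> V" "x \<in> Nr V A q z" "y \<in> Nr V A q z" "x \<noteq> y"
  shows "\<exists>ps. wk A ({x, y} \<union> (\<Union>j<q. Nr V A j z)) ps \<and> hd ps = x \<and> last ps = y"
proof -
  let ?L = "{x, y} \<union> (\<Union>j<q. Nr V A j z)"
  have "q \<noteq> 0"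
  proof
    assume "q = 0"
    then have "x = z" "y = z" using assms(2,3) Nr_0[OF assms(1), of A] by auto
    then show False using assms(4) by simp
  qed
  then have "y \<noteq> z" using assms(1,3) Nr_0[OF assms(1), of A] Nr_disj by (metis singletonI)
  obtain p1 where p1: "wk A ({x} \<union> (\<Union>j<q. Nr V A j z)) p1" "hd p1 = z" "last p1 = x"
    using descent[OF assms(1,2)] by blast
  obtain p2 where p2: "wk A ({y} \<union> (\<Union>j<q. Nr V A j z)) p2" "hd p2 = z" "last p2 = y"
    using descent[OF assms(1,3)] by blast
  obtain t where t: "p2 = z # t" using p2 unfolding wk_def by (cases p2) auto
  have "t \<noteq> []" using t p2(3) \<open>y \<noteq> z\<close> by auto
  have s2: "successively (adj A) (z # t)" using p2 t unfolding wk_def by simp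
  then have "adj A z (hd t)" "successively (adj A) t" using \<open>t \<noteq> []\<close>
    by (auto simp: successively_Cons)
  moreover have "successively (adj A) (rev p1)" using p1 unfolding wk_def
    by (simp add: adj_sym[of A] successively_mono)
  moreover have "last (rev p1) = z" using p1 unfolding wk_def by (simp add: last_rev)
  ultimately have "successively (adj A) (rev p1 @ t)" using successively_append_iff by fastforce
  moreover have "set (rev p1 @ t) \<subseteq> ?L" using p1(1) p2(1) t unfolding wk_def by auto
  moreover have "hd (rev p1 @ t) = x" using p1 unfolding wk_def by (simp add: hd_rev)
  moreover have "last (rev p1 @ t) = y" using p2(3) t \<open>t \<noteq> []\<close> by simp
  ultimately show ?thesis unfolding wk_def using \<open>t \<noteq> []\<close> by (intro exI[of _ "rev p1 @ t"]) simp
qed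




lemma card2: "a \<noteq> b \<Longrightarrow> card {u \<in> {a, b}. P u} = (if P a then 1 else 0) + (if P b then 1 else 0)"
proof (cases "P a"; cases "P b")
  assume "a \<noteq> b" "P a" "P b"
  then have "{u \<in> {a, b}. P u} = {a, b}" by blast
  then show ?thesis using \<open>a \<noteq> b\<close> \<open>P a\<close> \<open>P b\<close> by simp
next
  assume "a \<noteq> b" "P a" "\<not> P b"
  then have "{u \<in> {a, b}. P u} = {a}" by blast
  then show ?thesis using \<open>P a\<close> \<open>\<not> P b\<close> by simp
next
  assume "a \<noteq> b" "\<not> P a" "P b"
  then have "{u \<in> {a, b}. P u} = {b}" by blast
  then show ?thesis using \<open>\<not> P a\<close> \<open>P b\<close> by simp
next
  assume "a \<noteq> b" "\<not> P a" "\<not> P b"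
  then have "{u \<in> {a, b}. P u} = {}" by blast
  then show ?thesis using \<open>\<not> P a\<close> \<open>\<not> P b\<close> by simp
qed

lemma digraph_adj: "digraph V A \<Longrightarrow> adj A u v \<Longrightarrow> ((u, v) \<in> A) = ((v, u) \<notin> A)"
  unfolding digraph_def adj_def by blast

lemma digraph_noloop: "digraph V A \<Longrightarrow> \<not> adj A u u"
  unfolding digraph_def adj_def by blast

lemma lower_nonadj:
  assumes "u \<in> (\<Union>j<q. Nr V A j z)" "v \<in> Nr V A (Suc q) z"
  shows "\<not> adj A u v"
proof
  assume "adj A u v"
  from assms(1) obtain j where "j < q" "u \<in> Nr V A j z" by blast
  then have "Suc q \<le> Suc j" using Nr_adj[OF _ assms(2) \<open>adj A u v\<close>] by blast
  then show False using \<open>j < q\<close> by simp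
qed

lemma key:
  assumes dg: "digraph V A" and nd: "no_disoriented_long_hole V A" and z: "z \<in> V"
   and v: "v \<in> Nr V A (Suc q) z" and w: "w \<in> Nr V A (Suc q) z"
   and x: "x \<in> Nr V A q z" and y: "y \<in> Nr V A q z" and xy: "x \<noteq> y" "\<not> adj A x y"
   and xv: "adj A x v" and yw: "adj A y w" and xw: "\<not> adj A x w" and yv: "\<not> adj A y v"
   and vw: "adj A v w"
   and same: "(x, v) \<in> A \<longleftrightarrow> (y, w) \<in> A"
  shows False
proof -
  let ?L = "{x, y} \<union> (\<Union>j<q. Nr V A j z)"
  obtain ps0 where p0s: "wk A ?L ps0" "hd ps0 = x" "last ps0 = y" using connect[OF z x y xy(1)] by blast
  from shortest_walk[OF p0s] obtain ps where ps: "wk A ?L ps" "hd ps = x" "last ps = y" "distinct ps"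
     and ind: "\<forall>i j. i < j \<longrightarrow> j < length ps \<longrightarrow> adj A (ps ! i) (ps ! j) \<longrightarrow> j = Suc i"
    by blast
  define n where "n = length ps"
  have ne: "ps \<noteq> []" and sL: "set ps \<subseteq> ?L" and succ: "successively (adj A) ps"
    using ps(1) unfolding wk_def by auto
  have p0: "ps ! 0 = x" using ps(2) ne by (simp add: hd_conv_nth)
  have pl: "ps ! (n - 1) = y" using ps(3) ne unfolding n_def by (simp add: last_conv_nth)
  have n1: "n \<ge> 1" using ne unfolding n_def by (cases ps) auto
  have n2: "n \<noteq> 1" using p0 pl xy(1) by auto
  have n3: "n \<noteq> 2"
  proof
    assume "n = 2"
    then have "adj A (ps ! 0) (ps ! Suc 0)" using successively_nth[OF succ, of 0] unfolding n_def by simp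
    then show False using p0 pl \<open>n = 2\<close> xy(2) by simp
  qed
  have n3': "n \<ge> 3" using n1 n2 n3 by linarith
  have nth_in: "\<And>i. i < n \<Longrightarrow> ps ! i \<in> ?L" using sL unfolding n_def by (meson nth_mem subsetD)
  have interior: "\<And>i. 0 < i \<Longrightarrow> i < n - 1 \<Longrightarrow> ps ! i \<in> (\<Union>j<q. Nr V A j z)"
  proof -
    fix i assume i: "0 < i" "i < n - 1"
    have ilt: "i < length ps" using i unfolding n_def by simp
    have "ps ! i \<noteq> ps ! 0" using nth_eq_iff_index_eq[OF ps(4) ilt, of 0] i ne by simp
    moreover have "ps ! i \<noteq> ps ! (n - 1)" using nth_eq_iff_index_eq[OF ps(4), of i "n - 1"] i n1 unfolding n_def by simp
    ultimately have "ps ! i \<noteq> x" "ps ! i \<noteq> y" using p0 pl by auto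
    then show "ps ! i \<in> (\<Union>j<q. Nr V A j z)" using nth_in[of i] i by auto
  qed
  have adjsym: "\<And>a b. adj A a b = adj A b a" by (rule adj_sym)
  have noloop: "\<And>a. \<not> adj A a a" using digraph_noloop[OF dg] by blast
  have VA: "\<And>i. i < n \<Longrightarrow> adj A (ps ! i) v \<longleftrightarrow> i = 0"
  proof -
    fix i assume i: "i < n"
    consider "i = 0" | "i = n - 1" | "0 < i \<and> i < n - 1" using i by linarith
    then show "adj A (ps ! i) v \<longleftrightarrow> i = 0"
    proof cases
      case 1 then show ?thesis using p0 xv by simp
    next
      case 2 then show ?thesis using pl yv n3' by simp
    next
      case 3 then show ?thesis using interior[of i] lower_nonadj[OF _ v] by auto
    qed
  qed
  have WA: "\<And>i. i < n \<Longrightarrow> adj A (ps ! i) w \<longleftrightarrow> i = n - 1"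
  proof -
    fix i assume i: "i < n"
    consider "i = 0" | "i = n - 1" | "0 < i \<and> i < n - 1" using i by linarith
    then show "adj A (ps ! i) w \<longleftrightarrow> i = n - 1"
    proof cases
      case 1 then show ?thesis using p0 xw n3' by simp
    next
      case 2 then show ?thesis using pl yw by simp
    next
      case 3 then show ?thesis using interior[of i] lower_nonadj[OF _ w] by auto
    qed
  qed
  have PA: "\<And>i j. i < n \<Longrightarrow> j < n \<Longrightarrow> adj A (ps ! i) (ps ! j) \<longleftrightarrow> (j = Suc i \<or> i = Suc j)"
  proof -
    fix i j assume ij: "i < n" "j < n"
    show "adj A (ps ! i) (ps ! j) \<longleftrightarrow> (j = Suc i \<or> i = Suc j)"
    proof
      assume a: "adj A (ps ! i) (ps ! j)"
      consider "i < j" | "i = j" | "j < i" by linarith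
      then show "j = Suc i \<or> i = Suc j"
      proof cases
        case 1 then show ?thesis using ind a ij unfolding n_def by blast
      next
        case 2 then show ?thesis using a noloop by simp
      next
        case 3
        have "adj A (ps ! j) (ps ! i)" using a adjsym by simp
        then have "i = Suc j" using ind 3 ij unfolding n_def by blast
        then show ?thesis by simp
      qed
    next
      assume "j = Suc i \<or> i = Suc j"
      then show "adj A (ps ! i) (ps ! j)"
      proof
        assume "j = Suc i" then show ?thesis using successively_nth[OF succ, of i] ij unfolding n_def by simp
      next
        assume "i = Suc j" then show ?thesis using successively_nth[OF succ, of j] ij adjsym unfolding n_def by simp
      qed
    qed
  qed
  have lowL: "\<And>u. u \<in> ?L \<Longrightarrow> u \<notin> Nr V A (Suc q) z"
  proof
    fix u assume "u \<in> ?L" "u \<in> Nr V A (Suc q) z"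
    then have "u = x \<or> u = y \<or> (\<exists>j<q. u \<in> Nr V A j z)" by auto
    then consider "u \<in> Nr V A q z" | "\<exists>j<q. u \<in> Nr V A j z" using x y by blast
    then show False
    proof cases
      case 1 then show False using Nr_disj[OF 1 \<open>u \<in> Nr V A (Suc q) z\<close>] by simp
    next
      case 2
      then obtain j where "j < q" "u \<in> Nr V A j z" by blast
      then show False using Nr_disj[OF \<open>u \<in> Nr V A j z\<close> \<open>u \<in> Nr V A (Suc q) z\<close>] by simp
    qed
  qed
  have vnot: "v \<notin> set ps" using lowL v sL by blast
  have wnot: "w \<notin> set ps" using lowL w sL by blast
  have vnw: "v \<noteq> w" using vw noloop by blast
  define vs where "vs = ps @ [w, v]"
  define N where "N = n + 2"
  have lenvs: "length vs = N" unfolding vs_def N_def n_def by simp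
  have vsn: "\<And>i. i < N \<Longrightarrow> vs ! i = (if i < n then ps ! i else if i = n then w else v)"
  proof -
    fix i assume "i < N"
    then consider "i < n" | "i = n" | "i = Suc n" unfolding N_def by linarith
    then show "vs ! i = (if i < n then ps ! i else if i = n then w else v)"
      by cases (auto simp: vs_def nth_append n_def)
  qed
  have md: "\<And>i. i < N \<Longrightarrow> Suc i mod N = (if Suc i = N then 0 else Suc i)"
    by simp
  have distinct: "distinct vs" unfolding vs_def using ps(4) vnot wnot vnw by auto
  have inV: "\<And>u r. u \<in> Nr V A r z \<Longrightarrow> u \<in> V" using Nr_sub by (metis subsetD)
  have LV: "?L \<subseteq> V"
  proof
    fix u assume "u \<in> ?L"
    then have "u = x \<or> u = y \<or> (\<exists>j<q. u \<in> Nr V A j z)" by auto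
    then show "u \<in> V" using inV x y by blast
  qed
  have setV: "set vs \<subseteq> V"
  proof -
    have "set vs = set ps \<union> {w, v}" unfolding vs_def by simp
    moreover have "set ps \<subseteq> V" using sL LV by (rule subset_trans)
    moreover have "w \<in> V" "v \<in> V" using inV v w by blast+
    ultimately show ?thesis by simp
  qed
  have iff: "\<forall>i<N. \<forall>j<N. adj A (vs ! i) (vs ! j) \<longleftrightarrow> (j = Suc i mod N \<or> i = Suc j mod N)"
  proof (intro allI impI)
    fix i j assume i: "i < N" and j: "j < N"
    have ci: "i < n \<or> i = n \<or> i = Suc n" using i unfolding N_def by linarith
    have cj: "j < n \<or> j = n \<or> j = Suc n" using j unfolding N_def by linarith
    have Nn: "N = Suc (Suc n)" unfolding N_def by simp
    have E: "(j = Suc i mod N \<or> i = Suc j mod N) \<longleftrightarrow>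
       ((Suc i \<noteq> N \<and> j = Suc i) \<or> (Suc j \<noteq> N \<and> i = Suc j) \<or> (Suc i = N \<and> j = 0) \<or> (Suc j = N \<and> i = 0))"
      unfolding md[OF i] md[OF j] by auto
    have vi: "vs ! i = (if i < n then ps ! i else if i = n then w else v)" using vsn[OF i] .
    have vj: "vs ! j = (if j < n then ps ! j else if j = n then w else v)" using vsn[OF j] .
    have avw: "adj A w v" using vw adjsym by simp
    have main: "adj A (vs ! i) (vs ! j) \<longleftrightarrow>
       ((Suc i \<noteq> N \<and> j = Suc i) \<or> (Suc j \<noteq> N \<and> i = Suc j) \<or> (Suc i = N \<and> j = 0) \<or> (Suc j = N \<and> i = 0))"
    proof (cases "i < n"; cases "j < n")
      assume "i < n" "j < n" then show ?thesis using vi vj PA[of i j] Nn by simp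
    next
      assume h: "i < n" "\<not> j < n"
      then have "j = n \<or> j = Suc n" using cj by simp
      then show ?thesis
      proof
        assume "j = n" then show ?thesis using vi vj h WA[of i] Nn n3' by auto
      next
        assume "j = Suc n" then show ?thesis using vi vj h VA[of i] Nn n3' by auto
      qed
    next
      assume h: "\<not> i < n" "j < n"
      then have "i = n \<or> i = Suc n" using ci by simp
      then show ?thesis
      proof
        assume "i = n" then show ?thesis using vi vj h WA[of j] Nn n3' adjsym by auto
      next
        assume "i = Suc n" then show ?thesis using vi vj h VA[of j] Nn n3' adjsym by auto
      qed
    next
      assume h: "\<not> i < n" "\<not> j < n"
      then have "i = n \<or> i = Suc n" "j = n \<or> j = Suc n" using ci cj by simp_all
      then show ?thesis using vi vj noloop vw avw Nn n3' by auto
    qed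
    show "adj A (vs ! i) (vs ! j) \<longleftrightarrow> (j = Suc i mod N \<or> i = Suc j mod N)"
      using main E by simp
  qed
  have hole: "long_hole V A vs"
    unfolding long_hole_def is_hole_def using lenvs n3' distinct setV iff unfolding N_def by simp
  have nd': "directed_hole A vs \<or> alternating_hole A vs"
    using nd hole unfolding no_disoriented_long_hole_def disoriented_hole_def by blast
  have sv: "set vs = set ps \<union> {w, v}" unfolding vs_def by auto
  have xinps: "x \<in> set ps" using p0 n1 unfolding n_def by (metis hd_in_set ne ps(2))
  have yinps: "y \<in> set ps" using ps(3) ne by (metis last_in_set)
  have adjps_v: "\<And>u. u \<in> set ps \<Longrightarrow> adj A u v \<Longrightarrow> u = x"
    using VA p0 unfolding n_def by (metis in_set_conv_nth)
  have adjps_w: "\<And>u. u \<in> set ps \<Longrightarrow> adj A u w \<Longrightarrow> u = y"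
    using WA pl unfolding n_def by (metis in_set_conv_nth)
  have outv: "{u \<in> set vs. (v, u) \<in> A} = {u \<in> {x, w}. (v, u) \<in> A}"
  proof (rule set_eqI, rule iffI)
    fix u assume "u \<in> {u \<in> set vs. (v, u) \<in> A}"
    then have "u \<in> set vs" "adj A u v" "(v, u) \<in> A" by (auto simp: adj_def)
    then show "u \<in> {u \<in> {x, w}. (v, u) \<in> A}" using sv adjps_v noloop by auto
  next
    fix u assume "u \<in> {u \<in> {x, w}. (v, u) \<in> A}"
    then show "u \<in> {u \<in> set vs. (v, u) \<in> A}" using sv xinps by auto
  qed
  have outw: "{u \<in> set vs. (w, u) \<in> A} = {u \<in> {y, v}. (w, u) \<in> A}"
  proof (rule set_eqI, rule iffI)
    fix u assume "u \<in> {u \<in> set vs. (w, u) \<in> A}"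
    then have "u \<in> set vs" "adj A u w" "(w, u) \<in> A" by (auto simp: adj_def)
    then show "u \<in> {u \<in> {y, v}. (w, u) \<in> A}" using sv adjps_w noloop by auto
  next
    fix u assume "u \<in> {u \<in> {y, v}. (w, u) \<in> A}"
    then show "u \<in> {u \<in> set vs. (w, u) \<in> A}" using sv yinps by auto
  qed
  have xnw: "x \<noteq> w" using xinps wnot by blast
  have ynv: "y \<noteq> v" using yinps vnot by blast
  have odv: "outdeg_in A vs v = (if (v, x) \<in> A then 1 else 0) + (if (v, w) \<in> A then 1 else 0)"
    unfolding outdeg_in_def outv using card2[OF xnw] by simp
  have odw: "outdeg_in A vs w = (if (w, y) \<in> A then 1 else 0) + (if (w, v) \<in> A then 1 else 0)"
    unfolding outdeg_in_def outw using card2[OF ynv] by simp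
  have vin: "v \<in> set vs" and win: "w \<in> set vs" using sv by auto
  have a1: "((x, v) \<in> A) = ((v, x) \<notin> A)" using digraph_adj[OF dg xv] .
  have a2: "((y, w) \<in> A) = ((w, y) \<notin> A)" using digraph_adj[OF dg yw] .
  have a3: "((v, w) \<in> A) = ((w, v) \<notin> A)" using digraph_adj[OF dg vw] .
  have dv: "outdeg_in A vs v = 1" "outdeg_in A vs w = 1" if "directed_hole A vs"
    using that vin win unfolding directed_hole_def by blast+
  have av1: "outdeg_in A vs v = 2 \<or> outdeg_in A vs v = 0" if "alternating_hole A vs"
    using bspec[OF that[unfolded alternating_hole_def] vin] by simp
  have av2: "outdeg_in A vs w = 2 \<or> outdeg_in A vs w = 0" if "alternating_hole A vs"
    using bspec[OF that[unfolded alternating_hole_def] win] by simp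
  show False
  proof (cases "(x, v) \<in> A")
    case True
    then have t: "(v, x) \<notin> A" "(w, y) \<notin> A" using a1 a2 same by blast+
    show False
    proof (cases "(v, w) \<in> A")
      case True
      then have "(w, v) \<notin> A" using a3 by blast
      then have "outdeg_in A vs v = 1" "outdeg_in A vs w = 0" using odv odw t True by simp_all
      then show False using nd' dv av1 av2 by force
    next
      case False
      then have "(w, v) \<in> A" using a3 by blast
      then have "outdeg_in A vs v = 0" "outdeg_in A vs w = 1" using odv odw t False by simp_all
      then show False using nd' dv av1 av2 by force
    qed
  next
    case False
    then have t: "(v, x) \<in> A" "(w, y) \<in> A" using a1 a2 same by blast+
    show False
    proof (cases "(v, w) \<in> A")
      case True
      then have "(w, v) \<notin> A" using a3 by blast
      then have "outdeg_in A vs v = 2" "outdeg_in A vs w = 1" using odv odw t True by simp_all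
      then show False using nd' dv av1 av2 by force
    next
      case False
      then have "(w, v) \<in> A" using a3 by blast
      then have "outdeg_in A vs v = 1" "outdeg_in A vs w = 2" using odv odw t False by simp_all
      then show False using nd' dv av1 av2 by force
    qed
  qed
qed




definition colors :: "('a \<times> 'a) set \<Rightarrow> 'a set \<Rightarrow> ('a \<Rightarrow> nat) \<Rightarrow> nat \<Rightarrow> bool" where
  "colors A X f k \<longleftrightarrow> (\<forall>x\<in>X. f x < k) \<and> (\<forall>u\<in>X. \<forall>v\<in>X. adj A u v \<longrightarrow> f u \<noteq> f v)"

definition clq :: "('a \<times> 'a) set \<Rightarrow> 'a set \<Rightarrow> bool" where
  "clq A K \<longleftrightarrow> (\<forall>u\<in>K. \<forall>v\<in>K. u \<noteq> v \<longrightarrow> adj A u v)"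

lemma chi_alt: "chi A X = (LEAST k. \<exists>f. colors A X f k)"
  unfolding chi_def colors_def by simp

lemma chi_le: "colors A X f k \<Longrightarrow> chi A X \<le> k"
  unfolding chi_alt by (rule Least_le) blast

lemma colors_exist:
  assumes "finite X" "\<And>u. \<not> adj A u u"
  shows "\<exists>f k. colors A X f k"
proof -
  obtain f :: "'a \<Rightarrow> nat" and n where f: "f ` X = {i. i < n}" "inj_on f X"
    using finite_imp_inj_to_nat_seg[OF assms(1)] by blast
  have "colors A X f n"
    unfolding colors_def
  proof (intro conjI ballI impI)
    fix x assume "x \<in> X" then show "f x < n" using f(1) by blast
  next
    fix u v assume "u \<in> X" "v \<in> X" "adj A u v"
    then have "u \<noteq> v" using assms(2) by blast
    then show "f u \<noteq> f v" using f(2) \<open>u \<in> X\<close> \<open>v \<in> X\<close> by (meson inj_on_def)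
  qed
  then show ?thesis by blast
qed

lemma chi_colors:
  assumes "finite X" "\<And>u. \<not> adj A u u"
  shows "\<exists>f. colors A X f (chi A X)"
proof -
  obtain f k where "colors A X f k" using colors_exist[OF assms] by blast
  then have "\<exists>k. \<exists>f. colors A X f k" by blast
  then show ?thesis unfolding chi_alt by (rule LeastI_ex[where P="\<lambda>k. \<exists>f. colors A X f k"])
qed

lemma clique_num_ge:
  assumes "finite V" "K \<subseteq> V" "clq A K"
  shows "card K \<le> clique_num V A"
proof -
  let ?S = "{card K | K. K \<subseteq> V \<and> (\<forall>u\<in>K. \<forall>v\<in>K. u \<noteq> v \<longrightarrow> adj A u v)}"
  have "?S \<subseteq> {..card V}"
  proof
    fix c assume "c \<in> ?S"
    then obtain K' where "c = card K'" "K' \<subseteq> V" by blast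
    then show "c \<in> {..card V}" using card_mono[OF assms(1)] by simp
  qed
  then have "finite ?S" using finite_subset by blast
  moreover have "card K \<in> ?S" using assms(2,3) unfolding clq_def by blast
  ultimately show ?thesis unfolding clique_num_def by simp
qed

lemma clique_num_lt:
  assumes "finite W" "\<And>K. K \<subseteq> W \<Longrightarrow> clq B K \<Longrightarrow> card K < k" "k \<ge> 1"
  shows "clique_num W B < k"
proof -
  let ?S = "{card K | K. K \<subseteq> W \<and> (\<forall>u\<in>K. \<forall>v\<in>K. u \<noteq> v \<longrightarrow> adj B u v)}"
  have "?S \<subseteq> {..card W}"
  proof
    fix c assume "c \<in> ?S"
    then obtain K' where "c = card K'" "K' \<subseteq> W" by blast
    then show "c \<in> {..card W}" using card_mono[OF assms(1)] by simp
  qed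
  then have "finite ?S" using finite_subset by blast
  moreover have "0 \<in> ?S" by force
  moreover have "\<forall>a\<in>?S. a < k" using assms(2) unfolding clq_def by blast
  ultimately show ?thesis unfolding clique_num_def by (subst Max_less_iff) auto
qed

lemma transfer:
  fixes V :: "'a set" and A :: "('a \<times> 'a) set"
  assumes hyp: "\<forall>(W :: nat set) (B :: (nat \<times> nat) set).
           digraph W B \<and> clique_num W B < kappa \<and> no_disoriented_long_hole W B
           \<longrightarrow> chi B W \<le> tau"
    and dg: "digraph V A" and nd: "no_disoriented_long_hole V A" and ZV: "Z \<subseteq> V"
    and cl: "\<And>K. K \<subseteq> Z \<Longrightarrow> clq A K \<Longrightarrow> card K < kappa" and k1: "kappa \<ge> 1"
  shows "chi A Z \<le> tau"
proof -
  have finV: "finite V" using dg unfolding digraph_def by blast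
  have finZ: "finite Z" using finite_subset[OF ZV finV] .
  obtain f :: "'a \<Rightarrow> nat" and n where f: "f ` Z = {i. i < n}" "inj_on f Z"
    using finite_imp_inj_to_nat_seg[OF finZ] by blast
  define g where "g = inv_into Z f"
  define W where "W = f ` Z"
  define B where "B = {(f a, f b) | a b. (a, b) \<in> A \<and> a \<in> Z \<and> b \<in> Z}"
  have gf: "\<And>a. a \<in> Z \<Longrightarrow> g (f a) = a" unfolding g_def using f(2) by simp
  have fg: "\<And>m. m \<in> W \<Longrightarrow> f (g m) = m" unfolding g_def W_def by (simp add: f_inv_into_f)
  have gZ: "\<And>m. m \<in> W \<Longrightarrow> g m \<in> Z" unfolding g_def W_def by (simp add: inv_into_into)
  have injg: "inj_on g W" unfolding g_def W_def by (simp add: inj_on_inv_into)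
  have Bf: "\<And>a b. a \<in> Z \<Longrightarrow> b \<in> Z \<Longrightarrow> (f a, f b) \<in> B \<longleftrightarrow> (a, b) \<in> A"
  proof -
    fix a b assume ab: "a \<in> Z" "b \<in> Z"
    show "(f a, f b) \<in> B \<longleftrightarrow> (a, b) \<in> A"
    proof
      assume "(f a, f b) \<in> B"
      then obtain a' b' where "(a', b') \<in> A" "a' \<in> Z" "b' \<in> Z" "f a = f a'" "f b = f b'"
        unfolding B_def by blast
      then have "a = a'" "b = b'" using f(2) ab by (meson inj_on_def)+
      then show "(a, b) \<in> A" using \<open>(a', b') \<in> A\<close> by simp
    next
      assume "(a, b) \<in> A" then show "(f a, f b) \<in> B" unfolding B_def using ab by blast
    qed
  qed
  have BW: "B \<subseteq> W \<times> W" unfolding B_def W_def by blast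
  have Bg: "\<And>m m'. m \<in> W \<Longrightarrow> m' \<in> W \<Longrightarrow> (m, m') \<in> B \<longleftrightarrow> (g m, g m') \<in> A"
  proof -
    fix m m' assume mm: "m \<in> W" "m' \<in> W"
    have "(m, m') \<in> B \<longleftrightarrow> (f (g m), f (g m')) \<in> B" using fg mm by simp
    also have "\<dots> \<longleftrightarrow> (g m, g m') \<in> A" using Bf gZ mm by blast
    finally show "(m, m') \<in> B \<longleftrightarrow> (g m, g m') \<in> A" .
  qed
  have adjg: "\<And>m m'. m \<in> W \<Longrightarrow> m' \<in> W \<Longrightarrow> adj B m m' \<longleftrightarrow> adj A (g m) (g m')"
    unfolding adj_def using Bg by blast
  have adjf: "\<And>a b. a \<in> Z \<Longrightarrow> b \<in> Z \<Longrightarrow> adj B (f a) (f b) \<longleftrightarrow> adj A a b"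
    unfolding adj_def using Bf by blast
  have noloopA: "\<And>u. \<not> adj A u u" using dg unfolding digraph_def adj_def by blast
  have dgB: "digraph W B"
    unfolding digraph_def
  proof (intro conjI allI)
    show "finite W" unfolding W_def using finZ by simp
    show "B \<subseteq> W \<times> W" by (rule BW)
    fix v show "(v, v) \<notin> B"
    proof
      assume "(v, v) \<in> B"
      then have "v \<in> W" using BW by blast
      then have "(g v, g v) \<in> A" using Bg \<open>(v, v) \<in> B\<close> by blast
      then show False using dg unfolding digraph_def by blast
    qed
  next
    fix u v show "(u, v) \<in> B \<longrightarrow> (v, u) \<notin> B"
    proof (intro impI notI)
      assume "(u, v) \<in> B" "(v, u) \<in> B"
      then have "u \<in> W" "v \<in> W" using BW by blast+
      then have "(g u, g v) \<in> A" "(g v, g u) \<in> A" using Bg \<open>(u, v) \<in> B\<close> \<open>(v, u) \<in> B\<close> by blast+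
      then show False using dg unfolding digraph_def by blast
    qed
  qed
  have clB: "clique_num W B < kappa"
  proof (rule clique_num_lt)
    show "finite W" unfolding W_def using finZ by simp
    show "kappa \<ge> 1" by (rule k1)
    fix K assume K: "K \<subseteq> W" "clq B K"
    have "g ` K \<subseteq> Z" using K(1) gZ by blast
    moreover have "clq A (g ` K)" unfolding clq_def
    proof (intro ballI impI)
      fix a b assume "a \<in> g ` K" "b \<in> g ` K" "a \<noteq> b"
      then obtain m m' where "m \<in> K" "m' \<in> K" "a = g m" "b = g m'" by blast
      then have "m \<noteq> m'" using \<open>a \<noteq> b\<close> by blast
      then have "adj B m m'" using K(2) \<open>m \<in> K\<close> \<open>m' \<in> K\<close> unfolding clq_def by blast
      then show "adj A a b" using adjg \<open>a = g m\<close> \<open>b = g m'\<close> K(1) \<open>m \<in> K\<close> \<open>m' \<in> K\<close> by blast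
    qed
    ultimately have "card (g ` K) < kappa" using cl by blast
    moreover have "card (g ` K) = card K" using card_image inj_on_subset[OF injg K(1)] by blast
    ultimately show "card K < kappa" by simp
  qed
  have ndB: "no_disoriented_long_hole W B"
    unfolding no_disoriented_long_hole_def
  proof (intro allI impI notI)
    fix ws assume lh: "long_hole W B ws" and dis: "disoriented_hole B ws"
    define vs where "vs = map g ws"
    have wsW: "set ws \<subseteq> W" using lh unfolding long_hole_def is_hole_def by blast
    have len: "length vs = length ws" unfolding vs_def by simp
    have nthv: "\<And>i. i < length ws \<Longrightarrow> vs ! i = g (ws ! i)" unfolding vs_def by simp
    have setv: "set vs = g ` set ws" unfolding vs_def by simp
    have hole: "long_hole V A vs"
      unfolding long_hole_def is_hole_def
    proof (intro conjI allI impI)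
      show "4 \<le> length vs" "5 \<le> length vs" using lh len unfolding long_hole_def is_hole_def by simp_all
      show "distinct vs" unfolding vs_def using lh inj_on_subset[OF injg wsW]
        unfolding long_hole_def is_hole_def by (simp add: distinct_map)
      show "set vs \<subseteq> V"
      proof
        fix u assume "u \<in> set vs"
        then obtain m where "m \<in> set ws" "u = g m" using setv by blast
        then show "u \<in> V" using wsW gZ ZV by blast
      qed
    next
      fix i j assume i: "i < length vs" and j: "j < length vs"
      have iw: "i < length ws" "j < length ws" using i j len by simp_all
      have "ws ! i \<in> W" "ws ! j \<in> W" using wsW iw by (meson nth_mem subsetD)+
      then have "adj A (vs ! i) (vs ! j) \<longleftrightarrow> adj B (ws ! i) (ws ! j)"
        using adjg[of "ws ! i" "ws ! j"] nthv[OF iw(1)] nthv[OF iw(2)] by simp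
      also have "\<dots> \<longleftrightarrow> (j = Suc i mod length ws \<or> i = Suc j mod length ws)"
        using lh iw unfolding long_hole_def is_hole_def by blast
      finally show "adj A (vs ! i) (vs ! j) \<longleftrightarrow> (j = Suc i mod length vs \<or> i = Suc j mod length vs)"
        using len by simp
    qed
    have od: "\<And>m. m \<in> set ws \<Longrightarrow> outdeg_in A vs (g m) = outdeg_in B ws m"
    proof -
      fix m assume m: "m \<in> set ws"
      have mW: "m \<in> W" using m wsW by blast
      have eq: "{u \<in> set vs. (g m, u) \<in> A} = g ` {u \<in> set ws. (m, u) \<in> B}"
      proof
        show "{u \<in> set vs. (g m, u) \<in> A} \<subseteq> g ` {u \<in> set ws. (m, u) \<in> B}"
        proof
          fix u assume u: "u \<in> {u \<in> set vs. (g m, u) \<in> A}"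
          then have "u \<in> g ` set ws" using setv by simp
          then obtain m' where m': "m' \<in> set ws" "u = g m'" by (rule imageE)
          have m'W: "m' \<in> W" using m'(1) wsW by blast
          have "(g m, g m') \<in> A" using u m'(2) by simp
          then have "(m, m') \<in> B" using Bg[OF mW m'W] by simp
          then have "m' \<in> {u \<in> set ws. (m, u) \<in> B}" using m'(1) by simp
          then show "u \<in> g ` {u \<in> set ws. (m, u) \<in> B}" using m'(2) by (rule rev_image_eqI)
        qed
        show "g ` {u \<in> set ws. (m, u) \<in> B} \<subseteq> {u \<in> set vs. (g m, u) \<in> A}"
        proof
          fix u assume "u \<in> g ` {u \<in> set ws. (m, u) \<in> B}"
          then obtain m' where m': "m' \<in> {u \<in> set ws. (m, u) \<in> B}" "u = g m'" by (rule imageE)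
          have m'W: "m' \<in> W" using m'(1) wsW by auto
          have "(g m, g m') \<in> A" using Bg[OF mW m'W] m'(1) by simp
          moreover have "u \<in> set vs" using setv m' by simp
          ultimately show "u \<in> {u \<in> set vs. (g m, u) \<in> A}" using m'(2) by simp
        qed
      qed
      have sub: "{u \<in> set ws. (m, u) \<in> B} \<subseteq> W" using wsW by auto
      have "inj_on g {u \<in> set ws. (m, u) \<in> B}" using inj_on_subset[OF injg sub] .
      then have "card (g ` {u \<in> set ws. (m, u) \<in> B}) = card {u \<in> set ws. (m, u) \<in> B}"
        by (rule card_image)
      then show "outdeg_in A vs (g m) = outdeg_in B ws m"
        unfolding outdeg_in_def eq by simp
    qed
    have bi: "\<And>P. (\<forall>u\<in>set vs. P u) \<longleftrightarrow> (\<forall>m\<in>set ws. P (g m))" using setv by auto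
    have "directed_hole A vs \<longleftrightarrow> (\<forall>m\<in>set ws. outdeg_in A vs (g m) = 1)"
      unfolding directed_hole_def by (rule bi)
    also have "\<dots> \<longleftrightarrow> directed_hole B ws" unfolding directed_hole_def using od by simp
    finally have d: "directed_hole A vs \<longleftrightarrow> directed_hole B ws" .
    have "alternating_hole A vs \<longleftrightarrow> (\<forall>m\<in>set ws. outdeg_in A vs (g m) = 2 \<or> outdeg_in A vs (g m) = 0)"
      unfolding alternating_hole_def by (rule bi)
    also have "\<dots> \<longleftrightarrow> alternating_hole B ws" unfolding alternating_hole_def using od by simp
    finally have a: "alternating_hole A vs \<longleftrightarrow> alternating_hole B ws" .
    note d a
    have "disoriented_hole A vs" using d a dis unfolding disoriented_hole_def by simp
    then show False using nd hole unfolding no_disoriented_long_hole_def by blast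
  qed
  have "chi B W \<le> tau" using hyp[rule_format, of W B] dgB clB ndB by blast
  moreover have "chi A Z \<le> chi B W"
  proof -
    have "\<And>u. \<not> adj B u u" using dgB unfolding digraph_def adj_def by blast
    moreover have "finite W" using dgB unfolding digraph_def by blast
    ultimately obtain h where h: "colors B W h (chi B W)" using chi_colors by blast
    have "colors A Z (h \<circ> f) (chi B W)"
      unfolding colors_def
    proof (intro conjI ballI impI)
      fix x assume "x \<in> Z" then show "(h \<circ> f) x < chi B W" using h unfolding colors_def W_def by simp
    next
      fix u v assume "u \<in> Z" "v \<in> Z" "adj A u v"
      then have "adj B (f u) (f v)" using adjf by blast
      then show "(h \<circ> f) u \<noteq> (h \<circ> f) v" using h \<open>u \<in> Z\<close> \<open>v \<in> Z\<close> unfolding colors_def W_def by simp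
    qed
    then show ?thesis by (rule chi_le)
  qed
  ultimately show ?thesis by simp
qed




lemma ex_max_nat:
  fixes f :: "'b \<Rightarrow> nat"
  assumes "finite K" "K \<noteq> {}"
  shows "\<exists>x\<in>K. \<forall>y\<in>K. f y \<le> f x"
proof -
  have "Max (f ` K) \<in> f ` K" using assms by simp
  then obtain x where "x \<in> K" "f x = Max (f ` K)" by force
  moreover have "\<forall>y\<in>K. f y \<le> Max (f ` K)" using assms by simp
  ultimately show ?thesis by metis
qed

lemma mult_add_inj:
  fixes a a' s s' t :: nat
  assumes "s < t" "s' < t" "a * t + s = a' * t + s'"
  shows "a = a'"
proof -
  have "(a * t + s) div t = a" using assms(1) by simp
  moreover have "(a' * t + s') div t = a'" using assms(2) by simp
  ultimately show ?thesis using assms(3) by simp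
qed

lemma step:
  fixes kappa tau :: nat and V :: "'a set" and A :: "('a \<times> 'a) set" and z :: 'a
  assumes k1: "kappa \<ge> 1"
    and hyp: "\<forall>(W :: nat set) (B :: (nat \<times> nat) set).
           digraph W B \<and> clique_num W B < kappa \<and> no_disoriented_long_hole W B
           \<longrightarrow> chi B W \<le> tau"
    and dg: "digraph V A" and cn: "clique_num V A \<le> kappa" and nd: "no_disoriented_long_hole V A"
    and z: "z \<in> V"
  shows "chi A (Nr V A (Suc q) z) \<le> 2 * tau * chi A (Nr V A q z)"
proof -
  define P where "P = Nr V A q z"
  define C where "C = Nr V A (Suc q) z"
  have finV: "finite V" using dg unfolding digraph_def by blast
  have noloop: "\<And>u. \<not> adj A u u" using dg unfolding digraph_def adj_def by blast
  have PV: "P \<subseteq> V" and CV: "C \<subseteq> V" unfolding P_def C_def by (rule Nr_sub)+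
  have finP: "finite P" using finite_subset[OF PV finV] .
  define c where "c = chi A P"
  obtain phi where phi: "colors A P phi c" using chi_colors[OF finP noloop] unfolding c_def by blast
  obtain rho :: "'a \<Rightarrow> nat" and nn where rho: "rho ` V = {i. i < nn}" "inj_on rho V"
    using finite_imp_inj_to_nat_seg[OF finV] by blast
  define PR where "PR v x \<longleftrightarrow> x \<in> P \<and> adj A x v \<and> (\<forall>x'. x' \<in> P \<and> adj A x' v \<longrightarrow> rho x \<le> rho x')" for v x
  define par where "par v = (SOME x. PR v x)" for v
  have par: "\<And>v. v \<in> C \<Longrightarrow> PR v (par v)"
  proof -
    fix v assume "v \<in> C"
    then have "\<exists>x\<in>P. adj A x v" using Nr_parent[of v V A q z] unfolding C_def P_def by blast
    then obtain x0 where "x0 \<in> P" "adj A x0 v" by blast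
    then have "\<exists>x. (x \<in> P \<and> adj A x v) \<and> (\<forall>y. (y \<in> P \<and> adj A y v) \<longrightarrow> rho x \<le> rho y)"
      using ex_has_least_nat[of "\<lambda>x. x \<in> P \<and> adj A x v" x0 rho] by blast
    then have "\<exists>x. PR v x" unfolding PR_def by blast
    then show "PR v (par v)" unfolding par_def by (rule someI_ex)
  qed
  have parP: "\<And>v. v \<in> C \<Longrightarrow> par v \<in> P" using par unfolding PR_def by blast
  have paradj: "\<And>v. v \<in> C \<Longrightarrow> adj A (par v) v" using par unfolding PR_def by blast
  have parmin: "\<And>v x'. v \<in> C \<Longrightarrow> x' \<in> P \<Longrightarrow> adj A x' v \<Longrightarrow> rho (par v) \<le> rho x'"
    using par unfolding PR_def by blast
  define cls where "cls v = (phi (par v), (par v, v) \<in> A)" for v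
  define Zc where "Zc p = {v \<in> C. cls v = p}" for p
  have ZcC: "\<And>p. Zc p \<subseteq> C" unfolding Zc_def by blast
  have clique: "\<And>p K. K \<subseteq> Zc p \<Longrightarrow> clq A K \<Longrightarrow> card K < kappa"
  proof -
    fix p K assume KZ: "K \<subseteq> Zc p" and Kc: "clq A K"
    have KC: "K \<subseteq> C" using KZ ZcC by blast
    have KV: "K \<subseteq> V" using KC CV by blast
    have finK: "finite K" using finite_subset[OF KV finV] .
    show "card K < kappa"
    proof (cases "K = {}")
      case True then show ?thesis using k1 by simp
    next
      case False
      obtain v0 where v0: "v0 \<in> K" "\<forall>w\<in>K. rho (par w) \<le> rho (par v0)"
        using ex_max_nat[OF finK False, of "\<lambda>v. rho (par v)"] by blast
      define y0 where "y0 = par v0"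
      have v0C: "v0 \<in> C" using v0(1) KC by blast
      have y0P: "y0 \<in> P" unfolding y0_def using parP[OF v0C] .
      have y0v0: "adj A y0 v0" unfolding y0_def using paradj[OF v0C] .
      have clsv0: "cls v0 = p" using v0(1) KZ unfolding Zc_def by blast
      have ally: "\<forall>w\<in>K. adj A y0 w"
      proof
        fix w assume wK: "w \<in> K"
        show "adj A y0 w"
        proof (cases "w = v0")
          case True then show ?thesis using y0v0 by simp
        next
          case False
          have wC: "w \<in> C" using wK KC by blast
          have wv0: "adj A w v0" using Kc wK v0(1) False unfolding clq_def by blast
          have clsw: "cls w = p" using wK KZ unfolding Zc_def by blast
          define x where "x = par w"
          have xP: "x \<in> P" unfolding x_def using parP[OF wC] .
          have xw: "adj A x w" unfolding x_def using paradj[OF wC] .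
          show ?thesis
          proof (cases "x = y0")
            case True then show ?thesis using xw by simp
          next
            case xy: False
            have same_phi: "phi x = phi y0" and same_dir: "((x, w) \<in> A) = ((y0, v0) \<in> A)"
              using clsw clsv0 unfolding cls_def x_def y0_def by auto
            have nxy: "\<not> adj A x y0"
            proof
              assume "adj A x y0"
              then have "phi x \<noteq> phi y0" using phi xP y0P unfolding colors_def by blast
              then show False using same_phi by simp
            qed
            have le: "rho x \<le> rho y0" using v0(2) wK unfolding x_def y0_def by blast
            have xV: "x \<in> V" and y0V: "y0 \<in> V" using xP y0P PV by blast+
            have lt: "rho x < rho y0"
            proof -
              have "rho x \<noteq> rho y0" using rho(2) xV y0V xy by (meson inj_on_def)
              then show ?thesis using le by simp
            qed
            have nxv0: "\<not> adj A x v0"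
            proof
              assume "adj A x v0"
              then have "rho y0 \<le> rho x" using parmin[OF v0C xP] unfolding y0_def by blast
              then show False using lt by simp
            qed
            show ?thesis
            proof (rule ccontr)
              assume ny0w: "\<not> adj A y0 w"
              show False
                using key[OF dg nd z wC[unfolded C_def] v0C[unfolded C_def] xP[unfolded P_def]
                    y0P[unfolded P_def] xy nxy xw y0v0 nxv0 ny0w wv0 same_dir] .
            qed
          qed
        qed
      qed
      have y0K: "y0 \<notin> K"
      proof
        assume "y0 \<in> K"
        then have "y0 \<in> C" using KC by blast
        then show False using y0P Nr_disj unfolding C_def P_def by fastforce
      qed
      have "clq A (insert y0 K)" unfolding clq_def
      proof (intro ballI impI)
        fix a b assume "a \<in> insert y0 K" "b \<in> insert y0 K" "a \<noteq> b"
        then consider "a = y0" "b \<in> K" | "b = y0" "a \<in> K" | "a \<in> K" "b \<in> K" by blast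
        then show "adj A a b"
        proof cases
          case 1 then show ?thesis using ally by blast
        next
          case 2 then show ?thesis using ally adj_sym by metis
        next
          case 3 then show ?thesis using Kc \<open>a \<noteq> b\<close> unfolding clq_def by blast
        qed
      qed
      moreover have "insert y0 K \<subseteq> V" using KV y0P PV by blast
      ultimately have "card (insert y0 K) \<le> clique_num V A" using clique_num_ge[OF finV] by blast
      then have "Suc (card K) \<le> kappa" using card_insert_disjoint[OF finK y0K] cn by simp
      then show ?thesis by simp
    qed
  qed
  have chiZ: "\<And>p. chi A (Zc p) \<le> tau"
  proof -
    fix p
    show "chi A (Zc p) \<le> tau"
      using transfer[OF hyp dg nd _ _ k1, of "Zc p"] ZcC CV clique by blast
  qed
  have "\<forall>p. \<exists>h. colors A (Zc p) h tau"
  proof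
    fix p
    have "finite (Zc p)" using finite_subset[OF ZcC finite_subset[OF CV finV]] .
    then obtain h where h: "colors A (Zc p) h (chi A (Zc p))" using chi_colors noloop by blast
    then have "colors A (Zc p) h tau" using chiZ[of p] unfolding colors_def by (meson less_le_trans)
    then show "\<exists>h. colors A (Zc p) h tau" by blast
  qed
  then obtain psi where psi: "\<And>p. colors A (Zc p) (psi p) tau" by metis
  define key where "key v = 2 * phi (par v) + (if (par v, v) \<in> A then 1 else 0)" for v
  define col where "col v = key v * tau + psi (cls v) v" for v
  have inZ: "\<And>v. v \<in> C \<Longrightarrow> v \<in> Zc (cls v)" unfolding Zc_def by blast
  have psilt: "\<And>v. v \<in> C \<Longrightarrow> psi (cls v) v < tau" using psi inZ unfolding colors_def by blast
  have keylt: "\<And>v. v \<in> C \<Longrightarrow> Suc (key v) \<le> 2 * c"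
  proof -
    fix v assume "v \<in> C"
    then have "phi (par v) < c" using phi parP unfolding colors_def by blast
    then show "Suc (key v) \<le> 2 * c" unfolding key_def by simp
  qed
  have "colors A C col (2 * tau * c)"
    unfolding colors_def
  proof (intro conjI ballI impI)
    fix v assume vC: "v \<in> C"
    have "col v < key v * tau + tau" unfolding col_def using psilt[OF vC] by simp
    also have "\<dots> = Suc (key v) * tau" by simp
    also have "\<dots> \<le> 2 * c * tau" using keylt[OF vC] by (rule mult_right_mono) simp
    finally show "col v < 2 * tau * c" by (simp add: mult.commute mult.left_commute)
  next
    fix v w assume vC: "v \<in> C" and wC: "w \<in> C" and vw: "adj A v w"
    show "col v \<noteq> col w"
    proof (cases "cls v = cls w")
      case True
      then have "w \<in> Zc (cls v)" using inZ[OF wC] by simp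
      then have "psi (cls v) v \<noteq> psi (cls v) w" using psi[of "cls v"] inZ[OF vC] vw
        unfolding colors_def by blast
      moreover have "key v = key w" using True unfolding key_def cls_def by auto
      ultimately show ?thesis unfolding col_def using True by simp
    next
      case False
      have "key v \<noteq> key w"
      proof
        assume "key v = key w"
        then have "phi (par v) = phi (par w) \<and> ((par v, v) \<in> A) = ((par w, w) \<in> A)"
          unfolding key_def by (auto split: if_splits) presburger+
        then show False using False unfolding cls_def by simp
      qed
      then show ?thesis unfolding col_def using mult_add_inj psilt[OF vC] psilt[OF wC] by metis
    qed
  qed
  then have "chi A C \<le> 2 * tau * c" by (rule chi_le)
  then show ?thesis unfolding C_def c_def P_def .
qed



lemma Nr1_adj: "z \<in> V \<Longrightarrow> v \<in> Nr V A (Suc 0) z \<Longrightarrow> adj A z v"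
proof -
  assume z: "z \<in> V" and v: "v \<in> Nr V A (Suc 0) z"
  then have "\<exists>x\<in>Nr V A 0 z. adj A x v" using Nr_parent[of v V A 0 z] by blast
  then show "adj A z v" using Nr_0[OF z, of A] by simp
qed

lemma N1_bound:
  fixes kappa tau :: nat and V :: "'a set" and A :: "('a \<times> 'a) set" and z :: 'a
  assumes k1: "kappa \<ge> 1"
    and hyp: "\<forall>(W :: nat set) (B :: (nat \<times> nat) set).
           digraph W B \<and> clique_num W B < kappa \<and> no_disoriented_long_hole W B
           \<longrightarrow> chi B W \<le> tau"
    and dg: "digraph V A" and cn: "clique_num V A \<le> kappa" and nd: "no_disoriented_long_hole V A"
    and z: "z \<in> V"
  shows "chi A (Nr V A (Suc 0) z) \<le> tau"
proof -
  have finV: "finite V" using dg unfolding digraph_def by blast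
  have NV: "Nr V A (Suc 0) z \<subseteq> V" by (rule Nr_sub)
  have "\<And>K. K \<subseteq> Nr V A (Suc 0) z \<Longrightarrow> clq A K \<Longrightarrow> card K < kappa"
  proof -
    fix K assume KN: "K \<subseteq> Nr V A (Suc 0) z" and Kc: "clq A K"
    have finK: "finite K" using finite_subset[OF _ finV] KN NV by blast
    have zK: "z \<notin> K"
    proof
      assume "z \<in> K"
      then have "z \<in> Nr V A (Suc 0) z" using KN by blast
      moreover have "z \<in> Nr V A 0 z" using Nr_0[OF z, of A] by simp
      ultimately show False using Nr_disj by fastforce
    qed
    have adjz: "\<forall>w\<in>K. adj A z w" using KN Nr1_adj[OF z] by blast
    have "clq A (insert z K)" unfolding clq_def
    proof (intro ballI impI)
      fix a b assume "a \<in> insert z K" "b \<in> insert z K" "a \<noteq> b"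
      then consider "a = z" "b \<in> K" | "b = z" "a \<in> K" | "a \<in> K" "b \<in> K" by blast
      then show "adj A a b"
      proof cases
        case 1 then show ?thesis using adjz by blast
      next
        case 2 then show ?thesis using adjz adj_sym by metis
      next
        case 3 then show ?thesis using Kc \<open>a \<noteq> b\<close> unfolding clq_def by blast
      qed
    qed
    moreover have "insert z K \<subseteq> V" using KN NV z by blast
    ultimately have "card (insert z K) \<le> clique_num V A" using clique_num_ge[OF finV] by blast
    then have "Suc (card K) \<le> kappa" using card_insert_disjoint[OF finK zK] cn by simp
    then show "card K < kappa" by simp
  qed
  then show ?thesis using transfer[OF hyp dg nd NV _ k1] by blast
qed

theorem mainTheorem5:
  fixes kappa tau :: nat
    and V :: "'a set" and A :: "('a \<times> 'a) set" and z :: 'a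
  assumes "kappa \<ge> 1"
    and "\<forall>(W :: nat set) (B :: (nat \<times> nat) set).
           digraph W B \<and> clique_num W B < kappa \<and> no_disoriented_long_hole W B
           \<longrightarrow> chi B W \<le> tau"
    and "digraph V A" and "clique_num V A \<le> kappa" and "no_disoriented_long_hole V A"
    and "z \<in> V"
  shows "(\<forall>r \<ge> 1. chi A (Nr V A r z) \<le> 3 * tau * chi A (Nr V A (r - 1) z))
       \<and> (\<forall>r \<ge> 1. chi A (Nr V A r z) \<le> tau * (3 * tau) ^ (r - 1))
       \<and> (\<forall>r s. 1 \<le> r \<longrightarrow> r \<le> s \<longrightarrow> chi A (Nr V A s z) \<le> (3 * tau) ^ (s - r) * chi A (Nr V A r z))"
proof -
  have S: "\<And>q. chi A (Nr V A (Suc q) z) \<le> 3 * tau * chi A (Nr V A q z)"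
  proof -
    fix q
    have "chi A (Nr V A (Suc q) z) \<le> 2 * tau * chi A (Nr V A q z)"
      using step[OF assms] .
    also have "\<dots> \<le> 3 * tau * chi A (Nr V A q z)" by (intro mult_right_mono) simp_all
    finally show "chi A (Nr V A (Suc q) z) \<le> 3 * tau * chi A (Nr V A q z)" .
  qed
  have P1: "\<forall>r \<ge> 1. chi A (Nr V A r z) \<le> 3 * tau * chi A (Nr V A (r - 1) z)"
  proof (intro allI impI)
    fix r :: nat assume "r \<ge> 1"
    then obtain q where "r = Suc q" by (metis Suc_pred' less_le_trans zero_less_one)
    then show "chi A (Nr V A r z) \<le> 3 * tau * chi A (Nr V A (r - 1) z)" using S by simp
  qed
  have P2': "\<And>q. chi A (Nr V A (Suc q) z) \<le> tau * (3 * tau) ^ q"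
  proof -
    fix q show "chi A (Nr V A (Suc q) z) \<le> tau * (3 * tau) ^ q"
    proof (induction q)
      case 0 then show ?case using N1_bound[OF assms] by simp
    next
      case (Suc q)
      have "chi A (Nr V A (Suc (Suc q)) z) \<le> 3 * tau * chi A (Nr V A (Suc q) z)" by (rule S)
      also have "\<dots> \<le> 3 * tau * (tau * (3 * tau) ^ q)" using Suc.IH by (rule mult_left_mono) simp
      also have "\<dots> = tau * (3 * tau) ^ Suc q" by (simp add: mult_ac)
      finally show ?case .
    qed
  qed
  have P2: "\<forall>r \<ge> 1. chi A (Nr V A r z) \<le> tau * (3 * tau) ^ (r - 1)"
  proof (intro allI impI)
    fix r :: nat assume "r \<ge> 1"
    then obtain q where "r = Suc q" by (metis Suc_pred' less_le_trans zero_less_one)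
    then show "chi A (Nr V A r z) \<le> tau * (3 * tau) ^ (r - 1)" using P2'[of q] by simp
  qed
  have P3': "\<And>r d. chi A (Nr V A (r + d) z) \<le> (3 * tau) ^ d * chi A (Nr V A r z)"
  proof -
    fix r d show "chi A (Nr V A (r + d) z) \<le> (3 * tau) ^ d * chi A (Nr V A r z)"
    proof (induction d)
      case 0 then show ?case by simp
    next
      case (Suc d)
      have "chi A (Nr V A (r + Suc d) z) \<le> 3 * tau * chi A (Nr V A (r + d) z)" using S[of "r + d"] by simp
      also have "\<dots> \<le> 3 * tau * ((3 * tau) ^ d * chi A (Nr V A r z))" using Suc.IH by (rule mult_left_mono) simp
      also have "\<dots> = (3 * tau) ^ Suc d * chi A (Nr V A r z)" by (simp add: mult_ac)
      finally show ?case .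
    qed
  qed
  have P3: "\<forall>r s. 1 \<le> r \<longrightarrow> r \<le> s \<longrightarrow> chi A (Nr V A s z) \<le> (3 * tau) ^ (s - r) * chi A (Nr V A r z)"
  proof (intro allI impI)
    fix r s :: nat assume "1 \<le> r" "r \<le> s"
    then have "s = r + (s - r)" by simp
    then show "chi A (Nr V A s z) \<le> (3 * tau) ^ (s - r) * chi A (Nr V A r z)"
      using P3'[of r "s - r"] by simp
  qed
  show ?thesis using P1 P2 P3 by blast
qed

end
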